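(* Let $T=(p,q:F\to E)$ be a textile system with $p$ and $q$ surjective. Let $G_T$ be the associated 2-colored graph and $\sim$ the associated equivalence relation on its path category $G_T^*$. Then the quotient category $\Lambda_T=G_T^*/\sim$, with degree induced by the colors, is a 2-graph if and only if $T$ is LR.
   Context: Directed graph $E=(E^0,E^1,r,s)$. Textile system $T=(p,q:F\to E)$: graph homomorphisms $p,q$ (maps on vertices and edges commuting with $r,s$) with $f\mapsto(r(f),p(f),s(f),q(f))$ injective on $F^1$. LR: $p$ has unique $r$-path lifting (for $v\in F^0,e\in E^1$ with $p(v)=r(e)$, exactly one $f\in F^1$ with $r(f)=v,p(f)=e$) and $q$ has unique $s$-path lifting (same with $s$). A 2-graph is a countable category $\Lambda$ with a functor $d:\Lambda\to\mathbb N^2$ such that if $d(\lambda)=m+n$ there are unique $\mu,\nu$ with $d(\mu)=m,d(\nu)=n,\lambda=\mu\nu$ (composition $\mu\nu$ when $s(\mu)=r(\nu)$). The 2-colored graph $G_T$: vertices $E^0$; edges $E^1\sqcup F^0$; edges $e\in E^1$ have color $\varepsilon_1$ and range, source from $E$; edges $w\in F^0$ have color $\varepsilon_2$, $s(w)=p(w)$, $r(w)=q(w)$. Paths are composed right to left ($\alpha\beta$ is a path when $s(\alpha)=r(\beta)$), and the degree of a path counts edges of each color. The relation $\sim$: each vertex and edge is equivalent only to itself; on two-edge two-colored paths, $ve\sim e'w$ iff there is $f\in F^1$ with $r(f)=v$, $s(f)=w$, $p(f)=e$, $q(f)=e'$; $\sim$ is extended to all paths as the equivalence relation generated by these relations and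 compatible with concatenation ($[\lambda\mu]=[\lambda][\mu]$). *)

theory Defs
  imports Main "HOL-Library.Countable_Set" "HOL-Library.Product_Plus"
begin

definition dgraph :: "'v set \<Rightarrow> 'e set \<Rightarrow> ('e \<Rightarrow> 'v) \<Rightarrow> ('e \<Rightarrow> 'v) \<Rightarrow> bool" where
  "dgraph V Ed r s \<longleftrightarrow> (\<forall>e\<in>Ed. r e \<in> V \<and> s e \<in> V)"

definition graph_hom ::
  "'w set \<Rightarrow> 'f set \<Rightarrow> ('f \<Rightarrow> 'w) \<Rightarrow> ('f \<Rightarrow> 'w) \<Rightarrow>
   'v set \<Rightarrow> 'e set \<Rightarrow> ('e \<Rightarrow> 'v) \<Rightarrow> ('e \<Rightarrow> 'v) \<Rightarrow>
   ('w \<Rightarrow> 'v) \<Rightarrow> ('f \<Rightarrow> 'e) \<Rightarrow> bool" where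
  "graph_hom F0 F1 rF sF E0 E1 rE sE h0 h1 \<longleftrightarrow>
     (\<forall>w\<in>F0. h0 w \<in> E0) \<and> (\<forall>f\<in>F1. h1 f \<in> E1) \<and>
     (\<forall>f\<in>F1. rE (h1 f) = h0 (rF f) \<and> sE (h1 f) = h0 (sF f))"

definition textile_system ::
  "'v set \<Rightarrow> 'e set \<Rightarrow> ('e \<Rightarrow> 'v) \<Rightarrow> ('e \<Rightarrow> 'v) \<Rightarrow>
   'w set \<Rightarrow> 'f set \<Rightarrow> ('f \<Rightarrow> 'w) \<Rightarrow> ('f \<Rightarrow> 'w) \<Rightarrow>
   ('w \<Rightarrow> 'v) \<Rightarrow> ('f \<Rightarrow> 'e) \<Rightarrow> ('w \<Rightarrow> 'v) \<Rightarrow> ('f \<Rightarrow> 'e) \<Rightarrow> bool" where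
  "textile_system E0 E1 rE sE F0 F1 rF sF p0 p1 q0 q1 \<longleftrightarrow>
     dgraph E0 E1 rE sE \<and> dgraph F0 F1 rF sF \<and>
     graph_hom F0 F1 rF sF E0 E1 rE sE p0 p1 \<and>
     graph_hom F0 F1 rF sF E0 E1 rE sE q0 q1 \<and>
     inj_on (\<lambda>f. (rF f, p1 f, sF f, q1 f)) F1"

definition hom_surjective :: "'w set \<Rightarrow> 'f set \<Rightarrow> 'v set \<Rightarrow> 'e set \<Rightarrow>
   ('w \<Rightarrow> 'v) \<Rightarrow> ('f \<Rightarrow> 'e) \<Rightarrow> bool" where
  "hom_surjective F0 F1 E0 E1 h0 h1 \<longleftrightarrow> h0 ` F0 = E0 \<and> h1 ` F1 = E1"

definition textile_LR ::
  "'v set \<Rightarrow> 'e set \<Rightarrow> ('e \<Rightarrow> 'v) \<Rightarrow> ('e \<Rightarrow> 'v) \<Rightarrow>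
   'w set \<Rightarrow> 'f set \<Rightarrow> ('f \<Rightarrow> 'w) \<Rightarrow> ('f \<Rightarrow> 'w) \<Rightarrow>
   ('w \<Rightarrow> 'v) \<Rightarrow> ('f \<Rightarrow> 'e) \<Rightarrow> ('w \<Rightarrow> 'v) \<Rightarrow> ('f \<Rightarrow> 'e) \<Rightarrow> bool" where
  "textile_LR E0 E1 rE sE F0 F1 rF sF p0 p1 q0 q1 \<longleftrightarrow>
     (\<forall>v\<in>F0. \<forall>e\<in>E1. p0 v = rE e \<longrightarrow> (\<exists>!f. f \<in> F1 \<and> rF f = v \<and> p1 f = e)) \<and>
     (\<forall>v\<in>F0. \<forall>e\<in>E1. q0 v = sE e \<longrightarrow> (\<exists>!f. f \<in> F1 \<and> sF f = v \<and> q1 f = e))"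

text \<open>A (small) category with object set Ob, morphism set Mor, range (codomain) cd,
  source (domain) dm, identities idm and composition cmp (cmp f g defined when
  dm f = cd g, i.e. f after g).\<close>
definition category :: "'o set \<Rightarrow> 'm set \<Rightarrow> ('m \<Rightarrow> 'o) \<Rightarrow> ('m \<Rightarrow> 'o) \<Rightarrow>
    ('o \<Rightarrow> 'm) \<Rightarrow> ('m \<Rightarrow> 'm \<Rightarrow> 'm) \<Rightarrow> bool" where
  "category Ob Mor cd dm idm cmp \<longleftrightarrow>
     (\<forall>f\<in>Mor. cd f \<in> Ob \<and> dm f \<in> Ob) \<and>
     (\<forall>x\<in>Ob. idm x \<in> Mor \<and> cd (idm x) = x \<and> dm (idm x) = x) \<and>
     (\<forall>f\<in>Mor. \<forall>g\<in>Mor. dm f = cd g \<longrightarrow>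
        cmp f g \<in> Mor \<and> cd (cmp f g) = cd f \<and> dm (cmp f g) = dm g) \<and>
     (\<forall>f\<in>Mor. \<forall>g\<in>Mor. \<forall>h\<in>Mor. dm f = cd g \<longrightarrow> dm g = cd h \<longrightarrow>
        cmp (cmp f g) h = cmp f (cmp g h)) \<and>
     (\<forall>f\<in>Mor. cmp (idm (cd f)) f = f \<and> cmp f (idm (dm f)) = f)"

definition two_graph :: "'o set \<Rightarrow> 'm set \<Rightarrow> ('m \<Rightarrow> 'o) \<Rightarrow> ('m \<Rightarrow> 'o) \<Rightarrow>
    ('o \<Rightarrow> 'm) \<Rightarrow> ('m \<Rightarrow> 'm \<Rightarrow> 'm) \<Rightarrow> ('m \<Rightarrow> nat \<times> nat) \<Rightarrow> bool" where
  "two_graph Ob Mor cd dm idm cmp d \<longleftrightarrow>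
     category Ob Mor cd dm idm cmp \<and> countable Mor \<and>
     (\<forall>x\<in>Ob. d (idm x) = 0) \<and>
     (\<forall>f\<in>Mor. \<forall>g\<in>Mor. dm f = cd g \<longrightarrow> d (cmp f g) = d f + d g) \<and>
     (\<forall>l\<in>Mor. \<forall>m n. d l = m + n \<longrightarrow>
        (\<exists>!(\<mu>, \<nu>). \<mu> \<in> Mor \<and> \<nu> \<in> Mor \<and> dm \<mu> = cd \<nu> \<and>
            d \<mu> = m \<and> d \<nu> = n \<and> l = cmp \<mu> \<nu>))"

text \<open>Edges of G_T: Inl e for e in E1 (colour 1), Inr w for w in F0 (colour 2).\<close>
definition GT_edges :: "'e set \<Rightarrow> 'w set \<Rightarrow> ('e + 'w) set" where
  "GT_edges E1 F0 = E1 <+> F0"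

fun GT_r :: "('e \<Rightarrow> 'v) \<Rightarrow> ('w \<Rightarrow> 'v) \<Rightarrow> ('e + 'w) \<Rightarrow> 'v" where
  "GT_r rE q0 (Inl e) = rE e"
| "GT_r rE q0 (Inr w) = q0 w"

fun GT_s :: "('e \<Rightarrow> 'v) \<Rightarrow> ('w \<Rightarrow> 'v) \<Rightarrow> ('e + 'w) \<Rightarrow> 'v" where
  "GT_s sE p0 (Inl e) = sE e"
| "GT_s sE p0 (Inr w) = p0 w"

text \<open>A path in G_T is a pair (v, es): v is its range vertex and es the list of edges,
  written left (range side) to right (source side); (v, []) is the vertex v.\<close>
definition GT_paths :: "'v set \<Rightarrow> 'e set \<Rightarrow> ('e \<Rightarrow> 'v) \<Rightarrow> ('e \<Rightarrow> 'v) \<Rightarrow>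
    'w set \<Rightarrow> ('w \<Rightarrow> 'v) \<Rightarrow> ('w \<Rightarrow> 'v) \<Rightarrow> ('v \<times> ('e + 'w) list) set" where
  "GT_paths E0 E1 rE sE F0 p0 q0 =
     {(v, es). v \<in> E0 \<and> set es \<subseteq> GT_edges E1 F0 \<and>
        (es \<noteq> [] \<longrightarrow> GT_r rE q0 (hd es) = v) \<and>
        (\<forall>i. Suc i < length es \<longrightarrow> GT_s sE p0 (es ! i) = GT_r rE q0 (es ! Suc i))}"

definition path_range :: "('v \<times> ('e + 'w) list) \<Rightarrow> 'v" where
  "path_range x = fst x"

definition path_source :: "('e \<Rightarrow> 'v) \<Rightarrow> ('w \<Rightarrow> 'v) \<Rightarrow> ('v \<times> ('e + 'w) list) \<Rightarrow> 'v" where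
  "path_source sE p0 x = (if snd x = [] then fst x else GT_s sE p0 (last (snd x)))"

definition path_concat :: "('v \<times> ('e + 'w) list) \<Rightarrow> ('v \<times> ('e + 'w) list) \<Rightarrow> ('v \<times> ('e + 'w) list)" where
  "path_concat x y = (fst x, snd x @ snd y)"

definition path_degree :: "('v \<times> ('e + 'w) list) \<Rightarrow> nat \<times> nat" where
  "path_degree x = (length (filter isl (snd x)), length (filter (\<lambda>a. \<not> isl a) (snd x)))"

definition GT_step :: "'v set \<Rightarrow> 'e set \<Rightarrow> ('e \<Rightarrow> 'v) \<Rightarrow> ('e \<Rightarrow> 'v) \<Rightarrow>
    'w set \<Rightarrow> 'f set \<Rightarrow> ('f \<Rightarrow> 'w) \<Rightarrow> ('f \<Rightarrow> 'w) \<Rightarrow>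
    ('w \<Rightarrow> 'v) \<Rightarrow> ('f \<Rightarrow> 'e) \<Rightarrow> ('w \<Rightarrow> 'v) \<Rightarrow> ('f \<Rightarrow> 'e) \<Rightarrow>
    (('v \<times> ('e + 'w) list) \<times> ('v \<times> ('e + 'w) list)) set" where
  "GT_step E0 E1 rE sE F0 F1 rF sF p0 p1 q0 q1 =
     {((u, xs @ [Inr v, Inl e] @ ys), (u, xs @ [Inl e', Inr w] @ ys)) | u xs ys v e e' w.
        (u, xs @ [Inr v, Inl e] @ ys) \<in> GT_paths E0 E1 rE sE F0 p0 q0 \<and>
        (u, xs @ [Inl e', Inr w] @ ys) \<in> GT_paths E0 E1 rE sE F0 p0 q0 \<and>
        (\<exists>f\<in>F1. rF f = v \<and> sF f = w \<and> p1 f = e \<and> q1 f = e')}"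

definition GT_sim where
  "GT_sim E0 E1 rE sE F0 F1 rF sF p0 p1 q0 q1 =
     (let R = GT_step E0 E1 rE sE F0 F1 rF sF p0 p1 q0 q1 in (R \<union> R\<inverse>)\<^sup>*)"

definition rep :: "'a set \<Rightarrow> 'a" where "rep C = (SOME x. x \<in> C)"

definition LamT_mor where
  "LamT_mor E0 E1 rE sE F0 F1 rF sF p0 p1 q0 q1 =
     GT_paths E0 E1 rE sE F0 p0 q0 // GT_sim E0 E1 rE sE F0 F1 rF sF p0 p1 q0 q1"

definition LamT_cod :: "('v \<times> ('e + 'w) list) set \<Rightarrow> 'v" where
  "LamT_cod C = path_range (rep C)"

definition LamT_dom :: "('e \<Rightarrow> 'v) \<Rightarrow> ('w \<Rightarrow> 'v) \<Rightarrow> ('v \<times> ('e + 'w) list) set \<Rightarrow> 'v" where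
  "LamT_dom sE p0 C = path_source sE p0 (rep C)"

definition LamT_id where
  "LamT_id E0 E1 rE sE F0 F1 rF sF p0 p1 q0 q1 v =
     GT_sim E0 E1 rE sE F0 F1 rF sF p0 p1 q0 q1 `` {(v, [])}"

definition LamT_comp where
  "LamT_comp E0 E1 rE sE F0 F1 rF sF p0 p1 q0 q1 A B =
     GT_sim E0 E1 rE sE F0 F1 rF sF p0 p1 q0 q1 `` {path_concat (rep A) (rep B)}"

definition LamT_deg :: "('v \<times> ('e + 'w) list) set \<Rightarrow> nat \<times> nat" where
  "LamT_deg C = path_degree (rep C)"

end

theory Submission
  imports Defs "HOL-Library.Multiset"
begin

locale tx =
  fixes E0 :: "'v set" and E1 :: "'e set" and rE sE :: "'e \<Rightarrow> 'v"
    and F0 :: "'w set" and F1 :: "'f set" and rF sF :: "'f \<Rightarrow> 'w"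
    and p0 q0 :: "'w \<Rightarrow> 'v" and p1 q1 :: "'f \<Rightarrow> 'e"
  assumes T: "textile_system E0 E1 rE sE F0 F1 rF sF p0 p1 q0 q1"
begin

lemma rE_E0: "e \<in> E1 \<Longrightarrow> rE e \<in> E0" and sE_E0: "e \<in> E1 \<Longrightarrow> sE e \<in> E0"
  and rF_F0: "f \<in> F1 \<Longrightarrow> rF f \<in> F0" and sF_F0: "f \<in> F1 \<Longrightarrow> sF f \<in> F0"
  and p0_E0: "w \<in> F0 \<Longrightarrow> p0 w \<in> E0" and q0_E0: "w \<in> F0 \<Longrightarrow> q0 w \<in> E0"
  and p1_E1: "f \<in> F1 \<Longrightarrow> p1 f \<in> E1" and q1_E1: "f \<in> F1 \<Longrightarrow> q1 f \<in> E1"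
  and p1_r: "f \<in> F1 \<Longrightarrow> rE (p1 f) = p0 (rF f)" and p1_s: "f \<in> F1 \<Longrightarrow> sE (p1 f) = p0 (sF f)"
  and q1_r: "f \<in> F1 \<Longrightarrow> rE (q1 f) = q0 (rF f)" and q1_s: "f \<in> F1 \<Longrightarrow> sE (q1 f) = q0 (sF f)"
  and injT: "inj_on (\<lambda>f. (rF f, p1 f, sF f, q1 f)) F1"
  using T unfolding textile_system_def dgraph_def graph_hom_def by auto

abbreviation "gr \<equiv> GT_r rE q0"
abbreviation "gs \<equiv> GT_s sE p0"
abbreviation "Ed \<equiv> GT_edges E1 F0"
abbreviation "Pth \<equiv> GT_paths E0 E1 rE sE F0 p0 q0"
abbreviation "Rs \<equiv> GT_step E0 E1 rE sE F0 F1 rF sF p0 p1 q0 q1"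
abbreviation "Sm \<equiv> GT_sim E0 E1 rE sE F0 F1 rF sF p0 p1 q0 q1"

lemma Sm_def': "Sm = (Rs \<union> Rs\<inverse>)\<^sup>*" by (simp add: GT_sim_def Let_def)

lemma gs_E0: "x \<in> Ed \<Longrightarrow> gs x \<in> E0"
  by (cases x) (auto simp: GT_edges_def sE_E0 p0_E0)
lemma gr_E0: "x \<in> Ed \<Longrightarrow> gr x \<in> E0"
  by (cases x) (auto simp: GT_edges_def rE_E0 q0_E0)

fun ok :: "'v \<Rightarrow> ('e + 'w) list \<Rightarrow> bool" where
  "ok u [] = True"
| "ok u (x # L) = (x \<in> Ed \<and> gr x = u \<and> ok (gs x) L)"

definition srcL :: "'v \<Rightarrow> ('e + 'w) list \<Rightarrow> 'v" where
  "srcL u L = foldl (\<lambda>_ x. gs x) u L"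

lemma srcL_simps[simp]: "srcL u [] = u" "srcL u (x # L) = srcL (gs x) L"
  "srcL u (L @ M) = srcL (srcL u L) M"
  by (auto simp: srcL_def)

lemma path_source_srcL: "path_source sE p0 (u, L) = srcL u L"
  by (induction L arbitrary: u) (auto simp: path_source_def)

lemma Pth_Nil: "(u, []) \<in> Pth \<longleftrightarrow> u \<in> E0"
  by (auto simp: GT_paths_def)

lemma all_nat_split': "(\<forall>i. P i) \<longleftrightarrow> P 0 \<and> (\<forall>i. P (Suc i))"
  by (metis not0_implies_Suc)

lemma Pth_Cons: "(u, x # L) \<in> Pth \<longleftrightarrow> u \<in> E0 \<and> x \<in> Ed \<and> gr x = u \<and> (gs x, L) \<in> Pth"
proof -
  have "(\<forall>i. Suc i < length (x # L) \<longrightarrow> gs ((x # L) ! i) = gr ((x # L) ! Suc i)) \<longleftrightarrow>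
        (L \<noteq> [] \<longrightarrow> gs x = gr (hd L)) \<and> (\<forall>i. Suc i < length L \<longrightarrow> gs (L ! i) = gr (L ! Suc i))"
    by (subst all_nat_split') (auto simp: hd_conv_nth)
  then show ?thesis using gs_E0 by (auto simp: GT_paths_def)
qed

lemma Pth_ok: "(u, L) \<in> Pth \<longleftrightarrow> u \<in> E0 \<and> ok u L"
  by (induction L arbitrary: u) (auto simp: Pth_Nil Pth_Cons gs_E0)

lemma Pth_ok': "x \<in> Pth \<longleftrightarrow> fst x \<in> E0 \<and> ok (fst x) (snd x)"
  using Pth_ok[of "fst x" "snd x"] by simp

lemma ok_append: "ok u (L @ M) \<longleftrightarrow> ok u L \<and> ok (srcL u L) M"
  by (induction L arbitrary: u) auto

lemma ok_src_E0: "u \<in> E0 \<Longrightarrow> ok u L \<Longrightarrow> srcL u L \<in> E0"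
  by (induction L arbitrary: u) (auto simp: gs_E0)

lemma sq_ok: assumes "f \<in> F1"
  shows "ok z [Inr (rF f), Inl (p1 f)] \<longleftrightarrow> z = q0 (rF f)"
    "ok z [Inl (q1 f), Inr (sF f)] \<longleftrightarrow> z = q0 (rF f)"
    "srcL z [Inr (rF f), Inl (p1 f)] = p0 (sF f)"
    "srcL z [Inl (q1 f), Inr (sF f)] = p0 (sF f)"
  using assms by (auto simp: GT_edges_def rF_F0 sF_F0 p1_E1 q1_E1 p1_r q1_r q1_s p1_s)

lemma sq_ok_iff: "f \<in> F1 \<Longrightarrow>
   ok u (xs @ [Inr (rF f), Inl (p1 f)] @ ys) \<longleftrightarrow> ok u (xs @ [Inl (q1 f), Inr (sF f)] @ ys)"
  by (simp only: ok_append srcL_simps(3) sq_ok)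

lemma Rs_iff: "(a, b) \<in> Rs \<longleftrightarrow> (\<exists>u xs ys f. f \<in> F1 \<and> a = (u, xs @ [Inr (rF f), Inl (p1 f)] @ ys)
   \<and> b = (u, xs @ [Inl (q1 f), Inr (sF f)] @ ys) \<and> a \<in> Pth)"
  unfolding GT_step_def using sq_ok_iff by (auto simp: Pth_ok) blast+


lemma Rs_P: "(a, b) \<in> Rs \<Longrightarrow> a \<in> Pth \<and> b \<in> Pth"
  unfolding GT_step_def by auto

lemma Rs_inv:
  assumes "(a, b) \<in> Rs"
  shows "fst a = fst b" "srcL (fst a) (snd a) = srcL (fst b) (snd b)"
    "path_degree a = path_degree b" "length (snd a) = length (snd b)"
  using assms unfolding Rs_iff
  by (auto simp: sq_ok path_degree_def p1_s)

lemma Sm_inv: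
  assumes "\<And>a b. (a, b) \<in> Rs \<Longrightarrow> g a = g b" "(x, y) \<in> Sm"
  shows "g x = g y"
  using assms(2) unfolding Sm_def'
proof (induction rule: rtrancl_induct)
  case (step y z) then show ?case using assms(1) by (metis Un_iff converse_iff)
qed simp

lemma Sm_fst: "(x, y) \<in> Sm \<Longrightarrow> fst x = fst y"
  using Sm_inv[of fst] Rs_inv(1) by blast
lemma Sm_src: "(x, y) \<in> Sm \<Longrightarrow> srcL (fst x) (snd x) = srcL (fst y) (snd y)"
  using Sm_inv[of "\<lambda>a. srcL (fst a) (snd a)"] Rs_inv(2) by blast
lemma Sm_deg: "(x, y) \<in> Sm \<Longrightarrow> path_degree x = path_degree y"
  using Sm_inv[of path_degree] Rs_inv(3) by blast
lemma Sm_len: "(x, y) \<in> Sm \<Longrightarrow> length (snd x) = length (snd y)"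
  using Sm_inv[of "\<lambda>a. length (snd a)"] Rs_inv(4) by blast

lemma Sm_sym: "(x, y) \<in> Sm \<Longrightarrow> (y, x) \<in> Sm"
  unfolding Sm_def' by (metis sym_Un_converse sym_rtrancl symD)
lemma Sm_trans: "(x, y) \<in> Sm \<Longrightarrow> (y, z) \<in> Sm \<Longrightarrow> (x, z) \<in> Sm"
  unfolding Sm_def' by (rule rtrancl_trans)
lemma Sm_refl: "(x, x) \<in> Sm"
  unfolding Sm_def' by simp
lemma Rs_Sm: "(x, y) \<in> Rs \<Longrightarrow> (x, y) \<in> Sm"
  unfolding Sm_def' by auto

lemma Sm_P: "(x, y) \<in> Sm \<Longrightarrow> x \<in> Pth \<Longrightarrow> y \<in> Pth"
  unfolding Sm_def'
proof (induction rule: rtrancl_induct)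
  case (step y z) then show ?case using Rs_P by blast
qed simp

lemma Sm_short: "(x, y) \<in> Sm \<Longrightarrow> length (snd x) < 2 \<Longrightarrow> y = x"
  unfolding Sm_def'
  by (erule converse_rtranclE) (auto simp: Rs_iff)

lemma Rs_ext:
  assumes "(a, b) \<in> Rs" "u \<in> E0" "ok u L" "srcL u L = fst a" "ok (srcL (fst a) (snd a)) M"
  shows "((u, L @ snd a @ M), (u, L @ snd b @ M)) \<in> Rs"
proof -
  from assms(1) obtain v xs ys f where f: "f \<in> F1" and a: "a = (v, xs @ [Inr (rF f), Inl (p1 f)] @ ys)"
    and b: "b = (v, xs @ [Inl (q1 f), Inr (sF f)] @ ys)" and aP: "a \<in> Pth"
    unfolding Rs_iff by blast
  have "(u, L @ snd a @ M) \<in> Pth"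
    using assms aP by (auto simp: Pth_ok Pth_ok' ok_append)
  then show ?thesis unfolding Rs_iff using f a b
    by (intro exI[of _ u] exI[of _ "L @ xs"] exI[of _ "ys @ M"] exI[of _ f]) auto
qed

lemma Sm_ext:
  assumes "(a, b) \<in> Sm" "a \<in> Pth" "u \<in> E0" "ok u L" "srcL u L = fst a"
    "ok (srcL (fst a) (snd a)) M"
  shows "((u, L @ snd a @ M), (u, L @ snd b @ M)) \<in> Sm"
  using assms(1)
proof (induction rule: rtrancl_induct[OF assms(1)[unfolded Sm_def']])
  case 1 then show ?case using Sm_refl by blast
next
  case (2 y z)
  have ySm: "(a, y) \<in> Sm" using 2(1) unfolding Sm_def' .
  have yP: "y \<in> Pth" using Sm_P[OF ySm assms(2)] .
  have fy: "fst y = fst a" and sy: "srcL (fst y) (snd y) = srcL (fst a) (snd a)"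
    using Sm_fst[OF ySm] Sm_src[OF ySm] by auto
  have IH: "((u, L @ snd a @ M), (u, L @ snd y @ M)) \<in> Sm" using 2(3) ySm by blast
  show ?case
  proof (cases "(y, z) \<in> Rs")
    case True
    then have "((u, L @ snd y @ M), (u, L @ snd z @ M)) \<in> Rs"
      using Rs_ext[OF True assms(3,4)] fy sy assms(5,6) by simp
    then show ?thesis using IH Sm_trans Rs_Sm by blast
  next
    case False
    then have zy: "(z, y) \<in> Rs" using 2(2) by auto
    have "fst z = fst y" "srcL (fst z) (snd z) = srcL (fst y) (snd y)"
      using Rs_inv[OF zy] by auto
    then have "((u, L @ snd z @ M), (u, L @ snd y @ M)) \<in> Rs"
      using Rs_ext[OF zy assms(3,4)] fy sy assms(5,6) by simp
    then show ?thesis using IH Sm_trans Rs_Sm Sm_sym by blast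
  qed
qed


definition cls where "cls x = Sm `` {x}"

abbreviation "Mor \<equiv> LamT_mor E0 E1 rE sE F0 F1 rF sF p0 p1 q0 q1"
abbreviation "idm \<equiv> LamT_id E0 E1 rE sE F0 F1 rF sF p0 p1 q0 q1"
abbreviation "cmp \<equiv> LamT_comp E0 E1 rE sE F0 F1 rF sF p0 p1 q0 q1"
abbreviation "dm \<equiv> LamT_dom sE p0"
abbreviation "srcP x \<equiv> srcL (fst x) (snd x)"

lemma cls_mem: "y \<in> cls x \<longleftrightarrow> (x, y) \<in> Sm" by (simp add: cls_def)

lemma cls_eq_iff: "cls x = cls y \<longleftrightarrow> (x, y) \<in> Sm"
  unfolding cls_def using Sm_sym Sm_trans Sm_refl by blast

lemma rep_cls: "(x, rep (cls x)) \<in> Sm"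
  unfolding rep_def cls_mem[symmetric] by (rule someI[of _ x]) (simp add: cls_mem Sm_refl)

lemma Mor_iff: "C \<in> Mor \<longleftrightarrow> (\<exists>x\<in>Pth. C = cls x)"
  unfolding LamT_mor_def quotient_def cls_def by auto

lemma cls_Mor: "x \<in> Pth \<Longrightarrow> cls x \<in> Mor" using Mor_iff by blast

lemma Mor_rep: assumes "C \<in> Mor" shows "rep C \<in> Pth" "cls (rep C) = C"
proof -
  from assms obtain x where x: "x \<in> Pth" "C = cls x" using Mor_iff by blast
  then show "rep C \<in> Pth" using rep_cls Sm_P by blast
  show "cls (rep C) = C" using x rep_cls cls_eq_iff Sm_sym by metis
qed

lemma rep_cls_Sm: "(rep (cls x), x) \<in> Sm" using rep_cls Sm_sym by blast

lemma cd_cls: "LamT_cod (cls x) = fst x"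
  unfolding LamT_cod_def path_range_def using Sm_fst[OF rep_cls] by simp
lemma dm_cls: "dm (cls x) = srcP x"
  unfolding LamT_dom_def using Sm_src[OF rep_cls] path_source_srcL
  by (metis prod.collapse)
lemma deg_cls: "LamT_deg (cls x) = path_degree x"
  unfolding LamT_deg_def using Sm_deg[OF rep_cls] by simp

lemma idm_cls: "idm v = cls (v, [])" unfolding LamT_id_def cls_def by simp
lemma cmp_cls: "cmp A B = cls (path_concat (rep A) (rep B))" unfolding LamT_comp_def cls_def by simp

lemma concat_simp: "path_concat x y = (fst x, snd x @ snd y)" by (simp add: path_concat_def)

lemma concat_P: "x \<in> Pth \<Longrightarrow> y \<in> Pth \<Longrightarrow> srcP x = fst y \<Longrightarrow> path_concat x y \<in> Pth"
  by (auto simp: concat_simp Pth_ok' ok_append)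

lemma concat_src: "srcP x = fst y \<Longrightarrow> srcP (path_concat x y) = srcP y"
  by (simp add: concat_simp)

lemma concat_cong:
  assumes "(x, x') \<in> Sm" "(y, y') \<in> Sm" "x \<in> Pth" "y \<in> Pth" "srcP x = fst y"
  shows "(path_concat x y, path_concat x' y') \<in> Sm"
proof -
  have 1: "((fst x, snd x @ snd y), (fst x, snd x' @ snd y)) \<in> Sm"
    using Sm_ext[OF assms(1) assms(3), of "fst x" "[]" "snd y"] assms
    by (simp add: Pth_ok')
  have x'P: "x' \<in> Pth" using Sm_P assms by blast
  have fx: "fst x' = fst x" "srcP x' = srcP x" using Sm_fst[OF assms(1)] Sm_src[OF assms(1)] by auto
  have 2: "((fst x, snd x' @ snd y), (fst x, snd x' @ snd y')) \<in> Sm"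
    using Sm_ext[OF assms(2) assms(4), of "fst x" "snd x'" "[]"] assms x'P fx
    by (simp add: Pth_ok')
  have "fst x' = fst x" using fx by simp
  then show ?thesis using Sm_trans[OF 1 2] by (simp add: concat_simp)
qed

lemma Sm_Nil: "(x, (v, [])) \<in> Sm \<Longrightarrow> x = (v, [])"
  using Sm_short Sm_sym by fastforce

lemma category: "category E0 Mor LamT_cod dm idm cmp"
  unfolding category_def
proof (intro conjI ballI impI)
  fix f assume f: "f \<in> Mor"
  then obtain x where x: "x \<in> Pth" "f = cls x" using Mor_iff by blast
  then show "LamT_cod f \<in> E0" "dm f \<in> E0"
    using cd_cls dm_cls ok_src_E0 by (auto simp: Pth_ok')
next
  fix v assume v: "v \<in> E0"
  then show "idm v \<in> Mor" "LamT_cod (idm v) = v" "dm (idm v) = v"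
    by (auto simp: idm_cls cls_Mor Pth_Nil cd_cls dm_cls)
next
  fix f g assume f: "f \<in> Mor" and g: "g \<in> Mor" and fg: "dm f = LamT_cod g"
  have fg': "srcP (rep f) = fst (rep g)"
    using fg Mor_rep[OF f] Mor_rep[OF g] cd_cls dm_cls by metis
  have P: "path_concat (rep f) (rep g) \<in> Pth"
    using concat_P Mor_rep f g fg' by blast
  then show "cmp f g \<in> Mor" by (simp add: cmp_cls cls_Mor)
  show "LamT_cod (cmp f g) = LamT_cod f"
    using Mor_rep[OF f] cd_cls by (metis cmp_cls concat_simp fst_conv)
  show "dm (cmp f g) = dm g"
    using Mor_rep[OF g] dm_cls by (metis cmp_cls concat_src fg')
next
  fix f g h assume f: "f \<in> Mor" and g: "g \<in> Mor" and h: "h \<in> Mor"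
    and fg: "dm f = LamT_cod g" and gh: "dm g = LamT_cod h"
  have fg': "srcP (rep f) = fst (rep g)"
    using fg Mor_rep[OF f] Mor_rep[OF g] cd_cls dm_cls by metis
  have gh': "srcP (rep g) = fst (rep h)"
    using gh Mor_rep[OF h] Mor_rep[OF g] cd_cls dm_cls by metis
  define a where "a = rep f"
  define b where "b = rep g"
  define c where "c = rep h"
  have aP: "a \<in> Pth" and bP: "b \<in> Pth" and cP: "c \<in> Pth"
    using Mor_rep f g h a_def b_def c_def by auto
  have ab: "srcP a = fst b" and bc: "srcP b = fst c" using fg' gh' a_def b_def c_def by auto
  have abP: "path_concat a b \<in> Pth" using concat_P aP bP ab by blast
  have bcP: "path_concat b c \<in> Pth" using concat_P bP cP bc by blast
  have 1: "(path_concat (rep (cls (path_concat a b))) c, path_concat (path_concat a b) c) \<in> Sm"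
    by (rule concat_cong[OF rep_cls_Sm Sm_refl]) (use abP Mor_rep(1)[OF cls_Mor[OF abP]] cP concat_src[OF ab] bc
       Sm_src[OF rep_cls_Sm] Sm_fst[OF rep_cls_Sm] in auto)
  have 2: "(path_concat a (rep (cls (path_concat b c))), path_concat a (path_concat b c)) \<in> Sm"
    by (rule concat_cong[OF Sm_refl rep_cls_Sm]) (use bcP Mor_rep(1)[OF cls_Mor[OF bcP]] aP ab
       Sm_fst[OF rep_cls] in \<open>auto simp: concat_simp\<close>)
  have 3: "path_concat (path_concat a b) c = path_concat a (path_concat b c)"
    by (simp add: concat_simp)
  show "cmp (cmp f g) h = cmp f (cmp g h)"
    unfolding cmp_cls a_def[symmetric] b_def[symmetric] c_def[symmetric] cls_eq_iff
    using 1 2 3 Sm_sym Sm_trans by metis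
next
  fix f assume f: "f \<in> Mor"
  have r1: "rep (idm v) = (v, [])" for v
    using rep_cls[of "(v, [])"] Sm_short by (simp add: idm_cls)
  have c: "LamT_cod f = fst (rep f)" using Mor_rep[OF f] cd_cls by metis
  have d: "dm f = srcP (rep f)" using Mor_rep[OF f] dm_cls by metis
  show "cmp (idm (LamT_cod f)) f = f"
    unfolding cmp_cls r1 using Mor_rep[OF f] c by (simp add: concat_simp)
  show "cmp f (idm (dm f)) = f"
    unfolding cmp_cls r1 using Mor_rep[OF f] by (simp add: concat_simp)
qed


lemma two_eq: "[a, b] = xs @ c # d # ys \<Longrightarrow> a = c \<and> b = d"
  by (cases xs) (auto simp: Cons_eq_append_conv)

lemma first_step: "(x, y) \<in> Sm \<Longrightarrow> x \<noteq> y \<Longrightarrow> \<exists>z. (x, z) \<in> Rs \<or> (z, x) \<in> Rs"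
  unfolding Sm_def' by (erule converse_rtranclE) auto

lemma deg10: "path_degree (u, L) = (1, 0) \<Longrightarrow> \<exists>a. L = [Inl a]"
proof -
  assume d: "path_degree (u, L) = (1, 0)"
  then have "length L = 1" using sum_length_filter_compl[of isl L]
    by (simp add: path_degree_def)
  then obtain z where L: "L = [z]" by (metis One_nat_def length_0_conv length_Suc_conv)
  then show ?thesis using d by (cases z) (auto simp: path_degree_def)
qed

lemma deg01: "path_degree (u, L) = (0, 1) \<Longrightarrow> \<exists>a. L = [Inr a]"
proof -
  assume d: "path_degree (u, L) = (0, 1)"
  then have "length L = 1" using sum_length_filter_compl[of isl L]
    by (simp add: path_degree_def)
  then obtain z where L: "L = [z]" by (metis One_nat_def length_0_conv length_Suc_conv)
  then show ?thesis using d by (cases z) (auto simp: path_degree_def)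
qed

lemma ex1_pair_unique: "\<exists>!(a, b). P a b \<Longrightarrow> P a1 b1 \<Longrightarrow> P a2 b2 \<Longrightarrow> a1 = a2 \<and> b1 = b2"
  unfolding Ex1_def by auto

lemma short_cls_eq: "cls (u, [a]) = cls (u', [b]) \<Longrightarrow> u = u' \<and> a = b"
  using Sm_short[of "(u, [a])" "(u', [b])"] by (auto simp: cls_eq_iff)

lemma LR_of:
  assumes TG: "two_graph E0 Mor LamT_cod dm idm cmp LamT_deg"
  shows "textile_LR E0 E1 rE sE F0 F1 rF sF p0 p1 q0 q1"
proof -
  have fac: "\<And>l m n. l \<in> Mor \<Longrightarrow> LamT_deg l = m + n \<Longrightarrow> \<exists>!(\<mu>, \<nu>). \<mu> \<in> Mor \<and> \<nu> \<in> Mor \<and>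
     dm \<mu> = LamT_cod \<nu> \<and> LamT_deg \<mu> = m \<and> LamT_deg \<nu> = n \<and> l = cmp \<mu> \<nu>"
    using TG unfolding two_graph_def by blast
  have degrep: "LamT_deg \<mu> = path_degree (rep \<mu>)" for \<mu> by (simp add: LamT_deg_def)
  have A: "\<exists>!f. f \<in> F1 \<and> rF f = v \<and> p1 f = e" if v: "v \<in> F0" "e \<in> E1" "p0 v = rE e" for v e
  proof -
    define x where "x = (q0 v, [Inr v, Inl e])"
    have xP: "x \<in> Pth" using v by (auto simp: x_def Pth_ok GT_edges_def q0_E0)
    have dx: "LamT_deg (cls x) = (1, 0) + (0, 1)" by (simp add: deg_cls path_degree_def x_def)
    obtain \<mu> \<nu> where \<mu>\<nu>: "\<mu> \<in> Mor" "\<nu> \<in> Mor" "LamT_deg \<mu> = (1, 0)" "LamT_deg \<nu> = (0, 1)"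
      "cls x = cmp \<mu> \<nu>"
      using ex1_implies_ex[OF fac[OF cls_Mor[OF xP] dx]] by auto
    obtain a where a: "snd (rep \<mu>) = [Inl a]" using deg10[of "fst (rep \<mu>)" "snd (rep \<mu>)"] \<mu>\<nu>(3) degrep[of \<mu>] by auto
    obtain b where b: "snd (rep \<nu>) = [Inr b]" using deg01[of "fst (rep \<nu>)" "snd (rep \<nu>)"] \<mu>\<nu>(4) degrep[of \<nu>] by auto
    define y where "y = path_concat (rep \<mu>) (rep \<nu>)"
    have xy: "(x, y) \<in> Sm" using \<mu>\<nu>(5) cls_eq_iff cmp_cls y_def by metis
    have "x \<noteq> y" using a b by (auto simp: x_def y_def concat_simp)
    then obtain z where "(x, z) \<in> Rs \<or> (z, x) \<in> Rs" using first_step xy by blast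
    then obtain f where f: "f \<in> F1" "rF f = v" "p1 f = e"
      unfolding Rs_iff x_def by (auto dest!: two_eq)
    have P: "cls (q0 v, [Inl (q1 g)]) \<in> Mor \<and> cls (sE (q1 g), [Inr (sF g)]) \<in> Mor \<and>
       dm (cls (q0 v, [Inl (q1 g)])) = LamT_cod (cls (sE (q1 g), [Inr (sF g)])) \<and>
       LamT_deg (cls (q0 v, [Inl (q1 g)])) = (1, 0) \<and> LamT_deg (cls (sE (q1 g), [Inr (sF g)])) = (0, 1) \<and>
       cls x = cmp (cls (q0 v, [Inl (q1 g)])) (cls (sE (q1 g), [Inr (sF g)]))"
      if g: "g \<in> F1" "rF g = v" "p1 g = e" for g
    proof -
      have P1: "(q0 v, [Inl (q1 g)]) \<in> Pth" using g v
        by (auto simp: Pth_ok GT_edges_def q0_E0 q1_E1 q1_r)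
      have P2: "(sE (q1 g), [Inr (sF g)]) \<in> Pth" using g v
        by (auto simp: Pth_ok GT_edges_def sE_E0 q1_E1 q1_s sF_F0 q0_E0)
      have r1: "rep (cls (q0 v, [Inl (q1 g)])) = (q0 v, [Inl (q1 g)])"
        using Sm_short[OF rep_cls] by simp
      have r2: "rep (cls (sE (q1 g), [Inr (sF g)])) = (sE (q1 g), [Inr (sF g)])"
        using Sm_short[OF rep_cls] by simp
      have "(x, (q0 v, [Inl (q1 g), Inr (sF g)])) \<in> Rs"
        unfolding Rs_iff using g xP
        by (intro exI[of _ "q0 v"] exI[of _ "[]"] exI[of _ "[]"] exI[of _ g]) (auto simp: x_def)
      then have "cls x = cls (q0 v, [Inl (q1 g), Inr (sF g)])" using Rs_Sm cls_eq_iff by blast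
      then show ?thesis using P1 P2 cls_Mor
        by (simp add: cmp_cls r1 r2 concat_simp dm_cls cd_cls deg_cls path_degree_def)
    qed
    show ?thesis
    proof (rule ex1I[of _ f])
      show "f \<in> F1 \<and> rF f = v \<and> p1 f = e" using f by simp
    next
      fix g assume g: "g \<in> F1 \<and> rF g = v \<and> p1 g = e"
      have "cls (q0 v, [Inl (q1 g)]) = cls (q0 v, [Inl (q1 f)]) \<and>
            cls (sE (q1 g), [Inr (sF g)]) = cls (sE (q1 f), [Inr (sF f)])"
        by (rule ex1_pair_unique[OF fac[OF cls_Mor[OF xP] dx]]) (use P g f in auto)
      then have "q1 g = q1 f" "sF g = sF f" using short_cls_eq by auto
      then show "g = f" using injT g f by (auto simp: inj_on_def)
    qed
  qed
  have B: "\<exists>!f. f \<in> F1 \<and> sF f = v \<and> q1 f = e" if v: "v \<in> F0" "e \<in> E1" "q0 v = sE e" for v e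
  proof -
    define x where "x = (rE e, [Inl e, Inr v])"
    have xP: "x \<in> Pth" using v by (auto simp: x_def Pth_ok GT_edges_def rE_E0)
    have dx: "LamT_deg (cls x) = (0, 1) + (1, 0)" by (simp add: deg_cls path_degree_def x_def)
    obtain \<mu> \<nu> where \<mu>\<nu>: "\<mu> \<in> Mor" "\<nu> \<in> Mor" "LamT_deg \<mu> = (0, 1)" "LamT_deg \<nu> = (1, 0)"
      "cls x = cmp \<mu> \<nu>"
      using ex1_implies_ex[OF fac[OF cls_Mor[OF xP] dx]] by auto
    obtain a where a: "snd (rep \<mu>) = [Inr a]" using deg01[of "fst (rep \<mu>)" "snd (rep \<mu>)"] \<mu>\<nu>(3) degrep[of \<mu>] by auto
    obtain b where b: "snd (rep \<nu>) = [Inl b]" using deg10[of "fst (rep \<nu>)" "snd (rep \<nu>)"] \<mu>\<nu>(4) degrep[of \<nu>] by auto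
    define y where "y = path_concat (rep \<mu>) (rep \<nu>)"
    have xy: "(x, y) \<in> Sm" using \<mu>\<nu>(5) cls_eq_iff cmp_cls y_def by metis
    have "x \<noteq> y" using a b by (auto simp: x_def y_def concat_simp)
    then obtain z where "(x, z) \<in> Rs \<or> (z, x) \<in> Rs" using first_step xy by blast
    then obtain f where f: "f \<in> F1" "sF f = v" "q1 f = e"
      unfolding Rs_iff x_def by (auto dest!: two_eq)
    have P: "cls (rE e, [Inr (rF g)]) \<in> Mor \<and> cls (p0 (rF g), [Inl (p1 g)]) \<in> Mor \<and>
       dm (cls (rE e, [Inr (rF g)])) = LamT_cod (cls (p0 (rF g), [Inl (p1 g)])) \<and>
       LamT_deg (cls (rE e, [Inr (rF g)])) = (0, 1) \<and> LamT_deg (cls (p0 (rF g), [Inl (p1 g)])) = (1, 0) \<and>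
       cls x = cmp (cls (rE e, [Inr (rF g)])) (cls (p0 (rF g), [Inl (p1 g)]))"
      if g: "g \<in> F1" "sF g = v" "q1 g = e" for g
    proof -
      have P1: "(rE e, [Inr (rF g)]) \<in> Pth" using g v
        by (auto simp: Pth_ok GT_edges_def rE_E0 rF_F0 q1_r)
      have P2: "(p0 (rF g), [Inl (p1 g)]) \<in> Pth" using g v
        by (auto simp: Pth_ok GT_edges_def p0_E0 rF_F0 p1_E1 p1_r)
      have r1: "rep (cls (rE e, [Inr (rF g)])) = (rE e, [Inr (rF g)])"
        using Sm_short[OF rep_cls] by simp
      have r2: "rep (cls (p0 (rF g), [Inl (p1 g)])) = (p0 (rF g), [Inl (p1 g)])"
        using Sm_short[OF rep_cls] by simp
      have P3: "(rE e, [Inr (rF g), Inl (p1 g)]) \<in> Pth"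
        using P1 P2 by (auto simp: Pth_ok)
      have "((rE e, [Inr (rF g), Inl (p1 g)]), x) \<in> Rs"
        unfolding Rs_iff using g P3
        by (intro exI[of _ "rE e"] exI[of _ "[]"] exI[of _ "[]"] exI[of _ g]) (auto simp: x_def)
      then have "cls x = cls (rE e, [Inr (rF g), Inl (p1 g)])" using Rs_Sm cls_eq_iff Sm_sym by blast
      then show ?thesis using P1 P2 cls_Mor
        by (simp add: cmp_cls r1 r2 concat_simp dm_cls cd_cls deg_cls path_degree_def)
    qed
    show ?thesis
    proof (rule ex1I[of _ f])
      show "f \<in> F1 \<and> sF f = v \<and> q1 f = e" using f by simp
    next
      fix g assume g: "g \<in> F1 \<and> sF g = v \<and> q1 g = e"
      have "cls (rE e, [Inr (rF g)]) = cls (rE e, [Inr (rF f)]) \<and>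
            cls (p0 (rF g), [Inl (p1 g)]) = cls (p0 (rF f), [Inl (p1 f)])"
        by (rule ex1_pair_unique[OF fac[OF cls_Mor[OF xP] dx]]) (use P g f in auto)
      then have "rF g = rF f" "p1 g = p1 f" using short_cls_eq by auto
      then show "g = f" using injT g f by (auto simp: inj_on_def)
    qed
  qed
  show ?thesis unfolding textile_LR_def using A B by auto
qed


end

locale txLR = tx +
  assumes LR: "textile_LR E0 E1 rE sE F0 F1 rF sF p0 p1 q0 q1"
begin

lemma LRp: "v \<in> F0 \<Longrightarrow> e \<in> E1 \<Longrightarrow> p0 v = rE e \<Longrightarrow> \<exists>!f. f \<in> F1 \<and> rF f = v \<and> p1 f = e"
  and LRq: "v \<in> F0 \<Longrightarrow> e \<in> E1 \<Longrightarrow> q0 v = sE e \<Longrightarrow> \<exists>!f. f \<in> F1 \<and> sF f = v \<and> q1 f = e"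
  using LR unfolding textile_LR_def by auto

definition sw where
  "sw v e = (let f = (THE f. f \<in> F1 \<and> rF f = v \<and> p1 f = e) in (q1 f, sF f))"

lemma sw_f: "f \<in> F1 \<Longrightarrow> sw (rF f) (p1 f) = (q1 f, sF f)"
proof -
  assume f: "f \<in> F1"
  have "(THE g. g \<in> F1 \<and> rF g = rF f \<and> p1 g = p1 f) = f"
    using LRp[of "rF f" "p1 f"] f rF_F0 p1_E1 p1_r
    by (intro the1_equality) auto
  then show ?thesis by (simp add: sw_def)
qed

fun push where
  "push w [] = ([], w)"
| "push w (e # A) = (fst (sw w e) # fst (push (snd (sw w e)) A), snd (push (snd (sw w e)) A))"

fun nf where
  "nf [] = ([], [])"
| "nf (Inl e # L) = (e # fst (nf L), snd (nf L))"
| "nf (Inr w # L) = (fst (push w (fst (nf L))), snd (push w (fst (nf L))) # snd (nf L))"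

lemma nf_step: "sw v e = (e', w) \<Longrightarrow> nf (xs @ Inr v # Inl e # ys) = nf (xs @ Inl e' # Inr w # ys)"
proof (induction xs)
  case Nil then show ?case by simp
next
  case (Cons x xs) then show ?case by (cases x) simp_all
qed

lemma nf_Rs: "(a, b) \<in> Rs \<Longrightarrow> nf (snd a) = nf (snd b)"
  unfolding Rs_iff using nf_step sw_f by fastforce

lemma nf_Sm: "(a, b) \<in> Sm \<Longrightarrow> nf (snd a) = nf (snd b)"
  using Sm_inv[of "\<lambda>a. nf (snd a)"] nf_Rs by blast

lemma obtain_f: assumes "w \<in> F0" "e \<in> E1" "p0 w = rE e"
  obtains f where "f \<in> F1" "rF f = w" "p1 f = e" "sw w e = (q1 f, sF f)"
  using LRp[OF assms] sw_f by blast

lemma push_ok: "ok u (Inr w # map Inl A @ M) \<Longrightarrow>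
   ok u (map Inl (fst (push w A)) @ Inr (snd (push w A)) # M)"
proof (induction A arbitrary: u w)
  case Nil then show ?case by simp
next
  case (Cons e A)
  then have w: "w \<in> F0" "q0 w = u" "e \<in> E1" "rE e = p0 w" "ok (sE e) (map Inl A @ M)"
    by (auto simp: GT_edges_def)
  obtain f where f: "f \<in> F1" "rF f = w" "p1 f = e" "sw w e = (q1 f, sF f)"
    using obtain_f[of w e] w by metis
  have "ok (q0 (sF f)) (Inr (sF f) # map Inl A @ M)"
    using f w sF_F0 p1_s by (auto simp: GT_edges_def)
  then have "ok (q0 (sF f)) (map Inl (fst (push (sF f) A)) @ Inr (snd (push (sF f) A)) # M)"
    using Cons.IH by blast
  then show ?case using f w q1_E1 q1_r q1_s by (auto simp: GT_edges_def)
qed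

lemma nf_ok: "ok u L \<Longrightarrow> ok u (map Inl (fst (nf L)) @ map Inr (snd (nf L)))"
proof (induction L arbitrary: u rule: nf.induct)
  case 1 then show ?case by simp
next
  case (2 e L) then show ?case by (auto simp: GT_edges_def)
next
  case (3 w L)
  then have w: "w \<in> F0" "q0 w = u" "ok (p0 w) L" by (auto simp: GT_edges_def)
  then have "ok u (Inr w # map Inl (fst (nf L)) @ map Inr (snd (nf L)))"
    using 3 by (auto simp: GT_edges_def)
  from push_ok[OF this] show ?case by simp
qed

lemma push_len: "length (fst (push w A)) = length A"
  by (induction A arbitrary: w) auto

lemma nf_len: "length (fst (nf L)) = length (filter isl L)"
  by (induction L rule: nf.induct) (auto simp: push_len)

lemma push_inj: "ok a (Inr w # map Inl A) \<Longrightarrow> ok b (Inr w2 # map Inl A2) \<Longrightarrow>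
  length A = length A2 \<Longrightarrow> push w A = push w2 A2 \<Longrightarrow> w = w2 \<and> A = A2"
proof (induction A arbitrary: a b w w2 A2)
  case Nil then show ?case by simp
next
  case (Cons e A0)
  then obtain e2 A20 where A2: "A2 = e2 # A20" by (cases A2) auto
  from Cons.prems have w: "w \<in> F0" "e \<in> E1" "rE e = p0 w" "ok (sE e) (map Inl A0)"
    by (auto simp: GT_edges_def)
  from Cons.prems have w2: "w2 \<in> F0" "e2 \<in> E1" "rE e2 = p0 w2" "ok (sE e2) (map Inl A20)"
    by (auto simp: GT_edges_def A2)
  obtain f where f: "f \<in> F1" "rF f = w" "p1 f = e" "sw w e = (q1 f, sF f)"
    using obtain_f[of w e] w by metis
  obtain f2 where f2: "f2 \<in> F1" "rF f2 = w2" "p1 f2 = e2" "sw w2 e2 = (q1 f2, sF f2)"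
    using obtain_f[of w2 e2] w2 by metis
  have eq: "q1 f = q1 f2" "push (sF f) A0 = push (sF f2) A20"
    using Cons.prems(4) f f2 A2 by (auto simp: prod_eq_iff)
  have o1: "ok (q0 (sF f)) (Inr (sF f) # map Inl A0)"
    using f w sF_F0 p1_s by (auto simp: GT_edges_def)
  have o2: "ok (q0 (sF f2)) (Inr (sF f2) # map Inl A20)"
    using f2 w2 sF_F0 p1_s by (auto simp: GT_edges_def)
  have "sF f = sF f2" "A0 = A20"
    using Cons.IH[OF o1 o2 _ eq(2)] Cons.prems(3) A2 by auto
  then have "f = f2"
    using LRq[of "sF f" "q1 f"] f f2 eq sF_F0 q1_E1 q1_s by metis
  then show ?case using f f2 A2 \<open>A0 = A20\<close> by simp
qed

lemma len_filter_map: "length (filter id (map isl L)) = length (filter isl L)"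
  by (induction L) auto

lemma nf_uniq: "ok u L \<Longrightarrow> ok u' L' \<Longrightarrow> map isl L = map isl L' \<Longrightarrow> nf L = nf L' \<Longrightarrow> L = L'"
proof (induction L arbitrary: u u' L')
  case Nil then show ?case by simp
next
  case (Cons x L0)
  then obtain y L0' where L': "L' = y # L0'" and xy: "isl x = isl y" and mm: "map isl L0 = map isl L0'"
    by (cases L') auto
  show ?case
  proof (cases x)
    case (Inl e)
    then obtain e2 where y: "y = Inl e2" using xy by (cases y) auto
    then show ?thesis using Cons.prems Cons.IH[of "sE e" "sE e2" L0'] Inl L' mm
      by (auto simp: prod_eq_iff)
  next
    case (Inr w)
    then obtain w2 where y: "y = Inr w2" using xy by (cases y) auto
    from Cons.prems Inr have w: "w \<in> F0" "ok (p0 w) L0" by (auto simp: GT_edges_def)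
    from Cons.prems y L' have w2: "w2 \<in> F0" "ok (p0 w2) L0'" by (auto simp: GT_edges_def)
    have o1: "ok (q0 w) (Inr w # map Inl (fst (nf L0)))"
      using nf_ok[OF w(2)] w by (auto simp: ok_append GT_edges_def)
    have o2: "ok (q0 w2) (Inr w2 # map Inl (fst (nf L0')))"
      using nf_ok[OF w2(2)] w2 by (auto simp: ok_append GT_edges_def)
    have len: "length (fst (nf L0)) = length (fst (nf L0'))"
      using mm nf_len len_filter_map by metis
    have eqs: "push w (fst (nf L0)) = push w2 (fst (nf L0'))" "snd (nf L0) = snd (nf L0')"
      using Cons.prems(4) Inr y L' by (auto simp: prod_eq_iff)
    have "w = w2" "fst (nf L0) = fst (nf L0')" using push_inj[OF o1 o2 len eqs(1)] by auto
    then have "nf L0 = nf L0'" using eqs(2) by (simp add: prod_eq_iff)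
    then have "L0 = L0'" using Cons.IH[OF w(2) w2(2) mm] by simp
    then show ?thesis using Inr y L' \<open>w = w2\<close> by simp
  qed
qed

lemma pat_uniq: "x \<in> Pth \<Longrightarrow> y \<in> Pth \<Longrightarrow> (x, y) \<in> Sm \<Longrightarrow> map isl (snd x) = map isl (snd y) \<Longrightarrow> x = y"
  using nf_uniq[of "fst x" "snd x" "fst y" "snd y"] nf_Sm Sm_fst by (auto simp: Pth_ok' prod_eq_iff)


lemma swap_ex:
  assumes P: "(u, Y @ [y, z] @ Z) \<in> Pth" and d: "isl y \<noteq> isl z"
  shows "\<exists>y' z'. isl y' = isl z \<and> isl z' = isl y \<and> ((u, Y @ [y, z] @ Z), (u, Y @ [y', z'] @ Z)) \<in> Sm"
proof -
  have u: "u \<in> E0" and o: "ok (srcL u Y) [y, z]" using P by (auto simp: Pth_ok ok_append)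
  show ?thesis
  proof (cases y)
    case (Inl e)
    then obtain v where z: "z = Inr v" using d by (cases z) auto
    have v: "v \<in> F0" "e \<in> E1" "q0 v = sE e" using o Inl z by (auto simp: GT_edges_def)
    then obtain f where f: "f \<in> F1" "sF f = v" "q1 f = e" using LRq by blast
    have yz: "y = Inl (q1 f)" "z = Inr (sF f)" using Inl z f by auto
    have P2: "(u, Y @ [Inr (rF f), Inl (p1 f)] @ Z) \<in> Pth"
      using P sq_ok_iff[OF f(1), of u Y Z] yz by (simp add: Pth_ok)
    have "((u, Y @ [Inr (rF f), Inl (p1 f)] @ Z), (u, Y @ [Inl (q1 f), Inr (sF f)] @ Z)) \<in> Rs"
      unfolding Rs_iff using P2 f(1)
      by (intro exI[of _ u] exI[of _ Y] exI[of _ Z] exI[of _ f]) simp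
    then have "((u, Y @ [y, z] @ Z), (u, Y @ [Inr (rF f), Inl (p1 f)] @ Z)) \<in> Sm"
      using yz Rs_Sm Sm_sym by simp
    then show ?thesis using yz
      by (intro exI[of _ "Inr (rF f)"] exI[of _ "Inl (p1 f)"]) simp
  next
    case (Inr v)
    then obtain e where z: "z = Inl e" using d by (cases z) auto
    have v: "v \<in> F0" "e \<in> E1" "p0 v = rE e" using o Inr z by (auto simp: GT_edges_def)
    then obtain f where f: "f \<in> F1" "rF f = v" "p1 f = e" using LRp by blast
    have yz: "y = Inr (rF f)" "z = Inl (p1 f)" using Inr z f by auto
    have "((u, Y @ [Inr (rF f), Inl (p1 f)] @ Z), (u, Y @ [Inl (q1 f), Inr (sF f)] @ Z)) \<in> Rs"
      unfolding Rs_iff using P f(1) yz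
      by (intro exI[of _ u] exI[of _ Y] exI[of _ Z] exI[of _ f]) simp
    then have "((u, Y @ [y, z] @ Z), (u, Y @ [Inl (q1 f), Inr (sF f)] @ Z)) \<in> Sm"
      using yz Rs_Sm by simp
    then show ?thesis using yz
      by (intro exI[of _ "Inl (q1 f)"] exI[of _ "Inr (sF f)"]) simp
  qed
qed
lemma bubble:
  "(u, Y @ z # Z) \<in> Pth \<Longrightarrow> \<forall>y\<in>set Y. isl y \<noteq> isl z \<Longrightarrow>
   \<exists>z' Y'. isl z' = isl z \<and> map isl Y' = map isl Y \<and> ((u, Y @ z # Z), (u, z' # Y' @ Z)) \<in> Sm"
proof (induction Y arbitrary: z Z rule: rev_induct)
  case Nil then show ?case by (intro exI[of _ z] exI[of _ "[]"]) (simp add: Sm_refl)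
next
  case (snoc y Y0)
  have P: "(u, Y0 @ [y, z] @ Z) \<in> Pth" using snoc.prems by simp
  have d: "isl y \<noteq> isl z" using snoc.prems(2) by simp
  obtain y' z'' where yz: "isl y' = isl z" "isl z'' = isl y"
    "((u, Y0 @ [y, z] @ Z), (u, Y0 @ [y', z''] @ Z)) \<in> Sm"
    using swap_ex[OF P d] by blast
  have P2: "(u, Y0 @ y' # (z'' # Z)) \<in> Pth" using Sm_P[OF yz(3) P] by simp
  have d2: "\<forall>x\<in>set Y0. isl x \<noteq> isl y'" using snoc.prems(2) yz(1) by simp
  obtain z' Y0' where IH: "isl z' = isl y'" "map isl Y0' = map isl Y0"
    "((u, Y0 @ y' # (z'' # Z)), (u, z' # Y0' @ (z'' # Z))) \<in> Sm"
    using snoc.IH[OF P2 d2] by blast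
  have "((u, (Y0 @ [y]) @ z # Z), (u, z' # (Y0' @ [z'']) @ Z)) \<in> Sm"
    using Sm_trans[OF yz(3)[simplified] IH(3)] by simp
  then show ?case using IH(1,2) yz(1,2) by (intro exI[of _ z'] exI[of _ "Y0' @ [z'']"]) simp
qed

lemma pattern_ex: "(u, L) \<in> Pth \<Longrightarrow> mset c = mset (map isl L) \<Longrightarrow>
   \<exists>L'. ((u, L), (u, L')) \<in> Sm \<and> map isl L' = c"
proof (induction c arbitrary: u L)
  case Nil
  then have "mset (map isl L) = {#}" by simp
  then have "L = []" by simp
  then show ?case by (intro exI[of _ L]) (simp add: Sm_refl)
next
  case (Cons b c)
  have "b \<in> set (b # c)" by simp
  then have "b \<in> set (map isl L)" using mset_eq_setD[OF Cons.prems(2)] by (simp only:)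
  then have "\<exists>z\<in>set L. isl z = b" by auto
  then obtain Y z Z where L: "L = Y @ z # Z" "isl z = b" "\<forall>y\<in>set Y. \<not> isl y = b"
    by (rule split_list_first_propE)
  have d: "\<forall>y\<in>set Y. isl y \<noteq> isl z" using L by simp
  have P0: "(u, Y @ z # Z) \<in> Pth" using Cons.prems(1) L(1) by simp
  obtain z' Y' where bb: "isl z' = isl z" "map isl Y' = map isl Y"
    "((u, Y @ z # Z), (u, z' # Y' @ Z)) \<in> Sm"
    using bubble[OF P0 d] by blast
  have P2: "(u, z' # (Y' @ Z)) \<in> Pth" using Sm_P[OF bb(3) P0] by simp
  then have P3: "(gs z', Y' @ Z) \<in> Pth" and u: "u \<in> E0" "ok u [z']"
    by (auto simp: Pth_Cons Pth_ok gs_E0)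
  have "mset (b # c) = mset (map isl (z' # Y' @ Z))"
    using Cons.prems(2) L bb(1,2) by simp
  then have "mset c = mset (map isl (Y' @ Z))" using bb(1) L(2) by simp
  then obtain L'' where L'': "((gs z', Y' @ Z), (gs z', L'')) \<in> Sm" "map isl L'' = c"
    using Cons.IH[OF P3] by blast
  have "((u, [z'] @ snd (gs z', Y' @ Z) @ []), (u, [z'] @ snd (gs z', L'') @ [])) \<in> Sm"
    by (rule Sm_ext[OF L''(1) P3 u]) auto
  then have "((u, z' # Y' @ Z), (u, z' # L'')) \<in> Sm" by simp
  then have "((u, L), (u, z' # L'')) \<in> Sm" using Sm_trans[OF bb(3)] L(1) by simp
  then show ?case using L''(2) bb(1) L(2) by (intro exI[of _ "z' # L''"]) simp
qed
lemma len_filter_map2: "length (filter Not (map isl L)) = length (filter (\<lambda>a. \<not> isl a) L)"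
  by (induction L) auto

lemma deg_eq: "path_degree (u, L) = (length (filter id (map isl L)), length (filter Not (map isl L)))"
  by (simp add: path_degree_def len_filter_map len_filter_map2 comp_def)

lemma mset_bool:
  fixes xs ys :: "bool list"
  assumes "length (filter id xs) = length (filter id ys)" "length (filter Not xs) = length (filter Not ys)"
  shows "mset xs = mset ys"
proof -
  have "count (mset xs) b = count (mset ys) b" for b
  proof (cases b)
    case True
    have "filter ((=) b) xs = filter id xs" "filter ((=) b) ys = filter id ys"
      using True by (auto intro: filter_cong)
    then show ?thesis using assms by (simp add: count_mset count_list_eq_length_filter)
  next
    case False
    have "filter ((=) b) xs = filter Not xs" "filter ((=) b) ys = filter Not ys"
      using False by (auto intro: filter_cong)
    then show ?thesis using assms by (simp add: count_mset count_list_eq_length_filter)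
  qed
  then show ?thesis by (simp add: multiset_eq_iff)
qed

lemma pat_rep:
  assumes "x \<in> Pth" "path_degree x = (a, b)" "length (filter id c) = a" "length (filter Not c) = b"
  shows "\<exists>y. y \<in> Pth \<and> (x, y) \<in> Sm \<and> map isl (snd y) = c \<and> fst y = fst x"
proof -
  have "mset c = mset (map isl (snd x))"
    using assms deg_eq[of "fst x" "snd x"] by (intro mset_bool) auto
  then obtain L' where "((fst x, snd x), (fst x, L')) \<in> Sm" "map isl L' = c"
    using pattern_ex[of "fst x" "snd x" c] assms(1) by auto
  then show ?thesis using Sm_P assms(1) by (intro exI[of _ "(fst x, L')"]) auto
qed

abbreviation pat :: "nat \<Rightarrow> nat \<Rightarrow> bool list" where
  "pat a b \<equiv> replicate a True @ replicate b False"

lemma pat_counts: "length (filter id (pat a b)) = a" "length (filter Not (pat a b)) = b"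
  by (simp_all add: filter_replicate)

lemma pair_norm:
  assumes "\<mu> \<in> Mor" "\<nu> \<in> Mor" "dm \<mu> = LamT_cod \<nu>" "LamT_deg \<mu> = (m1, m2)" "LamT_deg \<nu> = (n1, n2)"
  shows "\<exists>a b. a \<in> Pth \<and> b \<in> Pth \<and> cls a = \<mu> \<and> cls b = \<nu> \<and> map isl (snd a) = pat m1 m2 \<and>
     map isl (snd b) = pat n1 n2 \<and> srcP a = fst b \<and>
     (path_concat a b, path_concat (rep \<mu>) (rep \<nu>)) \<in> Sm"
proof -
  obtain a where a: "a \<in> Pth" "(rep \<mu>, a) \<in> Sm" "map isl (snd a) = pat m1 m2"
    using pat_rep[OF Mor_rep(1)[OF assms(1)], of m1 m2 "pat m1 m2"] assms(4) pat_counts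
    by (auto simp: LamT_deg_def)
  obtain b where b: "b \<in> Pth" "(rep \<nu>, b) \<in> Sm" "map isl (snd b) = pat n1 n2"
    using pat_rep[OF Mor_rep(1)[OF assms(2)], of n1 n2 "pat n1 n2"] assms(5) pat_counts
    by (auto simp: LamT_deg_def)
  have ca: "cls a = \<mu>" using a(2) Mor_rep(2)[OF assms(1)] cls_eq_iff Sm_sym by metis
  have cb: "cls b = \<nu>" using b(2) Mor_rep(2)[OF assms(2)] cls_eq_iff Sm_sym by metis
  have ab: "srcP a = fst b" using assms(3) ca cb dm_cls cd_cls by metis
  have c: "(path_concat a b, path_concat (rep \<mu>) (rep \<nu>)) \<in> Sm"
    using concat_cong[OF Sm_sym[OF a(2)] Sm_sym[OF b(2)] a(1) b(1) ab] .
  show ?thesis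
    apply (rule exI[of _ a], rule exI[of _ b])
    using a b ca cb ab c by simp
qed

lemma ex1_pairI: assumes "P a b" "\<And>c d. P c d \<Longrightarrow> c = a \<and> d = b" shows "\<exists>!(x, y). P x y"
proof (rule ex1I[of _ "(a, b)"])
  show "case (a, b) of (x, y) \<Rightarrow> P x y" using assms(1) by simp
next
  fix z assume "case z of (x, y) \<Rightarrow> P x y"
  then show "z = (a, b)" using assms(2) by (cases z) simp
qed

lemma TG:
  assumes cE0: "countable E0" and cE1: "countable E1" and cF0: "countable F0"
  shows "two_graph E0 Mor LamT_cod dm idm cmp LamT_deg"
  unfolding two_graph_def
proof (intro conjI ballI allI impI)
  show "category E0 Mor LamT_cod dm idm cmp" by (rule category)
next
  have "Pth \<subseteq> E0 \<times> lists Ed" by (auto simp: GT_paths_def)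
  moreover have "countable (E0 \<times> lists Ed)" using cE0 cE1 cF0 by (simp add: GT_edges_def)
  ultimately have "countable Pth" using countable_subset by blast
  moreover have "Mor = cls ` Pth" by (auto simp: Mor_iff)
  ultimately show "countable Mor" by simp
next
  fix v assume "v \<in> E0"
  show "LamT_deg (idm v) = 0" by (simp add: idm_cls deg_cls path_degree_def zero_prod_def)
next
  fix f g assume f: "f \<in> Mor" and g: "g \<in> Mor" and fg: "dm f = LamT_cod g"
  show "LamT_deg (cmp f g) = LamT_deg f + LamT_deg g"
    unfolding cmp_cls deg_cls by (simp add: LamT_deg_def path_degree_def concat_simp plus_prod_def)
next
  fix l m n assume l: "l \<in> Mor" and dl: "LamT_deg l = m + n"
  obtain m1 m2 n1 n2 where mn: "m = (m1, m2)" "n = (n1, n2)" by (cases m, cases n) auto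
  define x where "x = rep l"
  have xP: "x \<in> Pth" and cx: "cls x = l" using Mor_rep[OF l] x_def by auto
  have dx: "path_degree x = (m1 + n1, m2 + n2)" using dl mn x_def
    by (simp add: LamT_deg_def plus_prod_def)
  let ?P = "\<lambda>\<mu> \<nu>. \<mu> \<in> Mor \<and> \<nu> \<in> Mor \<and> dm \<mu> = LamT_cod \<nu> \<and> LamT_deg \<mu> = m \<and> LamT_deg \<nu> = n \<and> l = cmp \<mu> \<nu>"
  obtain y where y: "y \<in> Pth" "(x, y) \<in> Sm" "map isl (snd y) = pat m1 m2 @ pat n1 n2" "fst y = fst x"
    using pat_rep[OF xP dx, of "pat m1 m2 @ pat n1 n2"] pat_counts by auto
  define Y1 where "Y1 = take (m1 + m2) (snd y)"
  define Y2 where "Y2 = drop (m1 + m2) (snd y)"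
  have Y: "snd y = Y1 @ Y2" by (simp add: Y1_def Y2_def)
  have mY1: "map isl Y1 = pat m1 m2" unfolding Y1_def take_map[symmetric] y(3) by simp
  have mY2: "map isl Y2 = pat n1 n2" unfolding Y2_def drop_map[symmetric] y(3) by simp
  define a where "a = (fst y, Y1)"
  define b where "b = (srcL (fst y) Y1, Y2)"
  have aP: "a \<in> Pth" and bP: "b \<in> Pth"
    using y(1) Y ok_src_E0 by (auto simp: a_def b_def Pth_ok' ok_append)
  have ab: "srcP a = fst b" by (simp add: a_def b_def)
  have yab: "path_concat a b = y" using Y by (simp add: a_def b_def concat_simp prod_eq_iff)
  have ex: "?P (cls a) (cls b)"
  proof (intro conjI)
    show "cls a \<in> Mor" "cls b \<in> Mor" using aP bP cls_Mor by auto
    show "dm (cls a) = LamT_cod (cls b)" using ab by (simp add: dm_cls cd_cls)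
    show "LamT_deg (cls a) = m" using mY1 pat_counts by (simp add: deg_cls a_def deg_eq mn)
    show "LamT_deg (cls b) = n" using mY2 pat_counts by (simp add: deg_cls b_def deg_eq mn)
    have s1: "srcP (rep (cls a)) = fst (rep (cls b))"
      using ab Sm_src[OF rep_cls[of a]] Sm_fst[OF rep_cls[of b]] by simp
    have "(path_concat (rep (cls a)) (rep (cls b)), path_concat a b) \<in> Sm"
      by (rule concat_cong[OF rep_cls_Sm rep_cls_Sm]) (use Mor_rep(1) cls_Mor aP bP s1 in auto)
    then have "(x, path_concat (rep (cls a)) (rep (cls b))) \<in> Sm"
      using Sm_trans[OF y(2) Sm_sym] yab by simp
    then show "l = cmp (cls a) (cls b)" unfolding cmp_cls cx[symmetric] cls_eq_iff .
  qed
  have uq: "\<mu>1 = \<mu>2 \<and> \<nu>1 = \<nu>2" if P1: "?P \<mu>1 \<nu>1" and P2: "?P \<mu>2 \<nu>2" for \<mu>1 \<nu>1 \<mu>2 \<nu>2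
  proof -
    obtain a1 b1 where ab1: "a1 \<in> Pth" "b1 \<in> Pth" "cls a1 = \<mu>1" "cls b1 = \<nu>1"
      "map isl (snd a1) = pat m1 m2" "map isl (snd b1) = pat n1 n2" "srcP a1 = fst b1"
      "(path_concat a1 b1, path_concat (rep \<mu>1) (rep \<nu>1)) \<in> Sm"
      using pair_norm[of \<mu>1 \<nu>1 m1 m2 n1 n2] P1 mn by auto
    obtain a2 b2 where ab2: "a2 \<in> Pth" "b2 \<in> Pth" "cls a2 = \<mu>2" "cls b2 = \<nu>2"
      "map isl (snd a2) = pat m1 m2" "map isl (snd b2) = pat n1 n2" "srcP a2 = fst b2"
      "(path_concat a2 b2, path_concat (rep \<mu>2) (rep \<nu>2)) \<in> Sm"
      using pair_norm[of \<mu>2 \<nu>2 m1 m2 n1 n2] P2 mn by auto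
    have "cmp \<mu>1 \<nu>1 = cmp \<mu>2 \<nu>2" using P1 P2 by simp
    then have "(path_concat (rep \<mu>1) (rep \<nu>1), path_concat (rep \<mu>2) (rep \<nu>2)) \<in> Sm"
      unfolding cmp_cls cls_eq_iff .
    then have S: "(path_concat a1 b1, path_concat a2 b2) \<in> Sm"
      using Sm_trans[OF ab1(8) Sm_trans[OF _ Sm_sym[OF ab2(8)]]] by blast
    have "path_concat a1 b1 = path_concat a2 b2"
      by (rule pat_uniq[OF concat_P[OF ab1(1,2,7)] concat_P[OF ab2(1,2,7)] S])
        (use ab1(5,6) ab2(5,6) in \<open>simp add: concat_simp\<close>)
    moreover have "length (snd a1) = length (snd a2)"
      using ab1(5) ab2(5) by (metis length_map)
    ultimately have "fst a1 = fst a2" "snd a1 = snd a2" "snd b1 = snd b2"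
      by (auto simp: concat_simp)
    then have "a1 = a2" "b1 = b2" using ab1(7) ab2(7) by (auto simp: prod_eq_iff)
    then show ?thesis using ab1(3,4) ab2(3,4) by auto
  qed
  show "\<exists>!(\<mu>, \<nu>). ?P \<mu> \<nu>"
    by (rule ex1_pairI[of ?P, OF ex]) (erule uq[OF _ ex])
qed

end

theorem theorem4p5:
  fixes E0 :: "'v set" and E1 :: "'e set" and rE sE :: "'e \<Rightarrow> 'v"
    and F0 :: "'w set" and F1 :: "'f set" and rF sF :: "'f \<Rightarrow> 'w"
    and p0 q0 :: "'w \<Rightarrow> 'v" and p1 q1 :: "'f \<Rightarrow> 'e"
  assumes T: "textile_system E0 E1 rE sE F0 F1 rF sF p0 p1 q0 q1"
    and cE0: "countable E0" and cE1: "countable E1"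
    and cF0: "countable F0" and cF1: "countable F1"
    and p_surj: "hom_surjective F0 F1 E0 E1 p0 p1"
    and q_surj: "hom_surjective F0 F1 E0 E1 q0 q1"
  shows "two_graph E0 (LamT_mor E0 E1 rE sE F0 F1 rF sF p0 p1 q0 q1)
            LamT_cod (LamT_dom sE p0)
            (LamT_id E0 E1 rE sE F0 F1 rF sF p0 p1 q0 q1)
            (LamT_comp E0 E1 rE sE F0 F1 rF sF p0 p1 q0 q1) LamT_deg
         \<longleftrightarrow> textile_LR E0 E1 rE sE F0 F1 rF sF p0 p1 q0 q1"
proof
  interpret tx E0 E1 rE sE F0 F1 rF sF p0 q0 p1 q1 by (unfold_locales) (rule T)
  assume "two_graph E0 (LamT_mor E0 E1 rE sE F0 F1 rF sF p0 p1 q0 q1)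
            LamT_cod (LamT_dom sE p0)
            (LamT_id E0 E1 rE sE F0 F1 rF sF p0 p1 q0 q1)
            (LamT_comp E0 E1 rE sE F0 F1 rF sF p0 p1 q0 q1) LamT_deg"
  then show "textile_LR E0 E1 rE sE F0 F1 rF sF p0 p1 q0 q1" by (rule LR_of)
next
  assume LR: "textile_LR E0 E1 rE sE F0 F1 rF sF p0 p1 q0 q1"
  interpret txLR E0 E1 rE sE F0 F1 rF sF p0 q0 p1 q1 by (unfold_locales) (rule T, rule LR)
  show "two_graph E0 (LamT_mor E0 E1 rE sE F0 F1 rF sF p0 p1 q0 q1)
            LamT_cod (LamT_dom sE p0)
            (LamT_id E0 E1 rE sE F0 F1 rF sF p0 p1 q0 q1)
            (LamT_comp E0 E1 rE sE F0 F1 rF sF p0 p1 q0 q1) LamT_deg"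
    by (rule TG[OF cE0 cE1 cF0])
qed

end
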